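(* Let $G=\{(1),(12)(34),(13)(24),(14)(23)\}\le S_4$, whose normalizer in $S_4$ is $S_4$. The homomorphism $S_4\to Aut_0(T_{4;G})$, $\nu\mapsto\hat\nu$, has kernel $G$ and image (the group of hidden symmetries) of order $6$, isomorphic to $S_3$. Writing $P_{ij}$ for the $G$-orbit of $(\{i,j\},\{k,l\})$ in $T_{(2^2)}$ and $Q_{ij}$ for the $G$-orbit of $(\{i,j\},\{k\},\{l\})$ in $T_{(2,1^2)}$ (where $\{i,j,k,l\}=\{1,2,3,4\}$; note $P_{ij}=P_{kl}$, $Q_{ij}=Q_{kl}$), one has: $\hat\nu(P_{ij})=P_{\nu(i)\nu(j)}$ and $\hat\nu(Q_{ij})=Q_{\nu(i)\nu(j)}$; in particular $\widehat{(13)}$ interchanges $P_{12}$ and $P_{14}$ and fixes $P_{13}$, and likewise interchanges $Q_{12}$ and $Q_{14}$ and fixes $Q_{13}$. Moreover, for each transposition $\nu$ the automorphism $\hat\nu$ acts on the six elements of $T_{(1^4);G}$ as a product of three disjoint transpositions, and for each $3$-cycle $\nu$ it acts on them as a product of two disjoint $3$-cycles.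
   Context: For a partition $\lambda=(\lambda_1\ge\dots\ge\lambda_k>0)$ of $4$, a tabloid of shape $\lambda$ is a sequence $A=(A_1,\dots,A_k)$ of pairwise disjoint subsets of $\{1,2,3,4\}$ with $|A_i|=\lambda_i$; $T_\lambda$ is their set. $S_4$ acts by $\zeta A=(\zeta(A_1),\dots,\zeta(A_k))$. Tabloids are partially ordered by $A\le B$ iff $A_1\cup\dots\cup A_i\subseteq B_1\cup\dots\cup B_i$ for all $i\ge1$ (missing rows empty); $T_{\lambda;G}$ is the set of $G$-orbits in $T_\lambda$, $T_{4;G}$ the set of all $G$-orbits of tabloids, ordered by $a\le b$ iff there are $A\in a$, $B\in b$ with $A\le B$. $Aut_0(T_{4;G})$ is the group of order-automorphisms of $T_{4;G}$ mapping each $T_{\mu;G}$ onto itself. For $\nu$ normalizing $G$, $\hat\nu$ is the map $O_G(A)\mapsto O_G(\nu A)$. *)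

theory Defs
  imports "HOL-Algebra.Sym_Groups"
begin

text \<open>Points are 1,2,3,4 (naturals). S4 is the group of permutations of {1..4},
  i.e. sym_group 4. A tabloid is a list of sets of points.\<close>

definition partitions4 :: "nat list set" where
  "partitions4 = {lam. sorted_wrt (\<ge>) lam \<and> (\<forall>x\<in>set lam. x > 0) \<and> sum_list lam = 4}"

definition tabloids :: "nat list \<Rightarrow> nat set list set" where
  "tabloids lam = {A. length A = length lam \<and>
      (\<forall>i<length A. A ! i \<subseteq> {1..4} \<and> card (A ! i) = lam ! i) \<and>
      (\<forall>i<length A. \<forall>j<length A. i \<noteq> j \<longrightarrow> A ! i \<inter> A ! j = {})}"

definition act :: "(nat \<Rightarrow> nat) \<Rightarrow> nat set list \<Rightarrow> nat set list" where
  "act \<zeta> A = map (\<lambda>S. \<zeta> ` S) A"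

definition tab_le :: "nat set list \<Rightarrow> nat set list \<Rightarrow> bool" where
  "tab_le A B \<longleftrightarrow> (\<forall>i\<ge>1. \<Union>(set (take i A)) \<subseteq> \<Union>(set (take i B)))"

definition Gk :: "(nat \<Rightarrow> nat) set" where
  "Gk = {id, transpose 1 2 \<circ> transpose 3 4, transpose 1 3 \<circ> transpose 2 4,
         transpose 1 4 \<circ> transpose 2 3}"

definition orb :: "nat set list \<Rightarrow> nat set list set" where
  "orb A = (\<lambda>g. act g A) ` Gk"

definition TG :: "nat list \<Rightarrow> nat set list set set" where
  "TG lam = orb ` tabloids lam"

definition T4G :: "nat set list set set" where
  "T4G = (\<Union>lam\<in>partitions4. TG lam)"

definition orb_le :: "nat set list set \<Rightarrow> nat set list set \<Rightarrow> bool" where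
  "orb_le a b \<longleftrightarrow> (\<exists>A\<in>a. \<exists>B\<in>b. tab_le A B)"

definition Aut0 :: "(nat set list set \<Rightarrow> nat set list set) set" where
  "Aut0 = {f. bij_betw f T4G T4G \<and>
      (\<forall>a\<in>T4G. \<forall>b\<in>T4G. orb_le (f a) (f b) \<longleftrightarrow> orb_le a b) \<and>
      (\<forall>mu\<in>partitions4. f ` TG mu = TG mu) \<and>
      (\<forall>x. x \<notin> T4G \<longrightarrow> f x = x)}"

definition aut0_group :: "(nat set list set \<Rightarrow> nat set list set) monoid" where
  "aut0_group = \<lparr>carrier = Aut0, mult = (\<circ>), one = id\<rparr>"

definition hat :: "(nat \<Rightarrow> nat) \<Rightarrow> nat set list set \<Rightarrow> nat set list set" where
  "hat \<nu> a = (if a \<in> T4G then orb (act \<nu> (SOME A. A \<in> a)) else a)"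

definition hidden_sym_group :: "(nat set list set \<Rightarrow> nat set list set) monoid" where
  "hidden_sym_group = \<lparr>carrier = hat ` carrier (sym_group 4), mult = (\<circ>), one = id\<rparr>"

definition P :: "nat \<Rightarrow> nat \<Rightarrow> nat set list set" where
  "P i j = orb [{i, j}, {1..4} - {i, j}]"

definition Q :: "nat \<Rightarrow> nat \<Rightarrow> nat set list set" where
  "Q i j = orb [{i, j}, {Min ({1..4} - {i, j})}, {Max ({1..4} - {i, j})}]"

definition is_transposition4 :: "(nat \<Rightarrow> nat) \<Rightarrow> bool" where
  "is_transposition4 \<nu> \<longleftrightarrow> (\<exists>a\<in>{1..4}. \<exists>b\<in>{1..4}. a \<noteq> b \<and> \<nu> = transpose a b)"

definition is_3cycle4 :: "(nat \<Rightarrow> nat) \<Rightarrow> bool" where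
  "is_3cycle4 \<nu> \<longleftrightarrow> (\<exists>a\<in>{1..4}. \<exists>b\<in>{1..4}. \<exists>c\<in>{1..4}. distinct [a, b, c] \<and>
      \<nu> = (\<lambda>x. if x = a then b else if x = b then c else if x = c then a else x))"

definition three_disjoint_transpositions :: "('a \<Rightarrow> 'a) \<Rightarrow> 'a set \<Rightarrow> bool" where
  "three_disjoint_transpositions f S \<longleftrightarrow> (\<exists>x1 x2 x3 x4 x5 x6.
      distinct [x1, x2, x3, x4, x5, x6] \<and> S = {x1, x2, x3, x4, x5, x6} \<and>
      f x1 = x2 \<and> f x2 = x1 \<and> f x3 = x4 \<and> f x4 = x3 \<and> f x5 = x6 \<and> f x6 = x5)"

definition two_disjoint_3cycles :: "('a \<Rightarrow> 'a) \<Rightarrow> 'a set \<Rightarrow> bool" where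
  "two_disjoint_3cycles f S \<longleftrightarrow> (\<exists>x1 x2 x3 x4 x5 x6.
      distinct [x1, x2, x3, x4, x5, x6] \<and> S = {x1, x2, x3, x4, x5, x6} \<and>
      f x1 = x2 \<and> f x2 = x3 \<and> f x3 = x1 \<and> f x4 = x5 \<and> f x5 = x6 \<and> f x6 = x4)"

end

theory Submission
  imports Defs
begin

lemma four: "{1..4::nat} = {1,2,3,4}" by auto

lemma perm_eq4:
  fixes r g :: "nat \<Rightarrow> nat"
  assumes "r permutes {1..4}" "g permutes {1..4}"
    "r 1 = g 1" "r 2 = g 2" "r 3 = g 3" "r 4 = g 4"
  shows "r = g"
proof
  fix x :: nat
  show "r x = g x"
  proof (cases "x \<in> {1..4}")
    case True then have "x = 1 \<or> x = 2 \<or> x = 3 \<or> x = 4" by auto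
    then show ?thesis using assms(3-6) by (elim disjE) simp_all
  next
    case False then show ?thesis using assms permutes_not_in by metis
  qed
qed

lemma Gk_perm: "g \<in> Gk \<Longrightarrow> g permutes {1..4}"
  unfolding Gk_def by (auto intro!: permutes_compose permutes_swap_id permutes_id)

lemma G_by_values:
  assumes "r permutes {1..4}"
    and "(r 1, r 2, r 3, r 4) \<in> {(1,2,3,4),(2,1,4,3),(3,4,1,2),(4,3,2,1)}"
  shows "r \<in> Gk"
proof -
  have "r = id \<or> r = transpose 1 2 \<circ> transpose 3 4 \<or> r = transpose 1 3 \<circ> transpose 2 4 \<or>
    r = transpose 1 4 \<circ> transpose 2 3"
    using assms(2)
  proof (elim insertE emptyE)
    assume "(r 1, r 2, r 3, r 4) = (1,2,3,4)" then show ?thesis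
      using perm_eq4[OF assms(1) permutes_id] by simp
  next
    assume "(r 1, r 2, r 3, r 4) = (2,1,4,3)" then show ?thesis
      using perm_eq4[OF assms(1) Gk_perm, of "transpose 1 2 \<circ> transpose 3 4"] by (simp add: Gk_def transpose_def)
  next
    assume "(r 1, r 2, r 3, r 4) = (3,4,1,2)" then show ?thesis
      using perm_eq4[OF assms(1) Gk_perm, of "transpose 1 3 \<circ> transpose 2 4"] by (simp add: Gk_def transpose_def)
  next
    assume "(r 1, r 2, r 3, r 4) = (4,3,2,1)" then show ?thesis
      using perm_eq4[OF assms(1) Gk_perm, of "transpose 1 4 \<circ> transpose 2 3"] by (simp add: Gk_def transpose_def)
  qed
  then show ?thesis unfolding Gk_def by blast
qed

lemma Gk_values: "g \<in> Gk \<Longrightarrow> (g 1, g 2, g 3, g 4) \<in> {(1,2,3,4),(2,1,4,3),(3,4,1,2),(4,3,2,1)}"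
  unfolding Gk_def by (elim insertE emptyE) (simp_all add: transpose_def)

lemma Gk_comp: assumes g: "g \<in> Gk" and h: "h \<in> Gk" shows "g \<circ> h \<in> Gk"
proof (rule G_by_values)
  show "g \<circ> h permutes {1..4}" by (blast intro: permutes_compose Gk_perm g h)
  show "((g \<circ> h) 1, (g \<circ> h) 2, (g \<circ> h) 3, (g \<circ> h) 4) \<in> {(1,2,3,4),(2,1,4,3),(3,4,1,2),(4,3,2,1)}"
    using Gk_values[OF g] Gk_values[OF h] by (elim insertE emptyE; simp)+
qed

lemma Gk_char: "g \<in> Gk \<longleftrightarrow> g permutes {1..4} \<and> (g = id \<or> (\<forall>x\<in>{1..4}. g x \<noteq> x \<and> g (g x) = x))"
proof
  assume g: "g \<in> Gk"
  have "g = id \<or> (\<forall>x\<in>{1..4}. g x \<noteq> x \<and> g (g x) = x)"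
    using Gk_values[OF g]
  proof (elim insertE emptyE)
    assume "(g 1, g 2, g 3, g 4) = (1,2,3,4)" then have "g = id"
      using perm_eq4[OF Gk_perm[OF g] permutes_id] by simp
    then show ?thesis by blast
  qed (unfold four, simp_all)
  then show "g permutes {1..4} \<and> (g = id \<or> (\<forall>x\<in>{1..4}. g x \<noteq> x \<and> g (g x) = x))"
    using Gk_perm[OF g] by blast
next
  assume a: "g permutes {1..4} \<and> (g = id \<or> (\<forall>x\<in>{1..4}. g x \<noteq> x \<and> g (g x) = x))"
  then have p: "g permutes {1..4}" by blast
  show "g \<in> Gk"
  proof (cases "g = id")
    case True then show ?thesis by (simp add: Gk_def)
  next
    case False
    then have f: "\<forall>x\<in>{1..4}. g x \<noteq> x \<and> g (g x) = x" using a by blast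
    have r: "g x \<in> {1,2,3,4}" if "x \<in> {1,2,3,4}" for x
      using permutes_in_image[OF p] that four by auto
    have i: "g x = g y \<Longrightarrow> x = y" for x y using permutes_inj[OF p] by (auto dest: injD)
    have f1: "g 1 \<noteq> 1" "g (g 1) = 1" "g 2 \<noteq> 2" "g (g 2) = 2" "g 3 \<noteq> 3" "g (g 3) = 3" "g 4 \<noteq> 4" "g (g 4) = 4"
      using f by auto
    have r1: "g 1 \<in> {1,2,3,4}" "g 2 \<in> {1,2,3,4}" "g 3 \<in> {1,2,3,4}" "g 4 \<in> {1,2,3,4}" using r by auto
    have "(g 1, g 2, g 3, g 4) \<in> {(1,2,3,4),(2,1,4,3),(3,4,1,2),(4,3,2,1)}"
    proof -
      have "g 1 = 2 \<or> g 1 = 3 \<or> g 1 = 4" using r1(1) f1(1) by auto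
      then show ?thesis
      proof (elim disjE)
        assume h1: "g 1 = 2"
        then have h2: "g 2 = 1" using f1(2) by simp
        have "g 3 \<noteq> 1" using h2 i[of 3 2] by auto
        moreover have "g 3 \<noteq> 2" using h1 i[of 3 1] by auto
        ultimately have h3: "g 3 = 4" using r1(3) f1(5) by auto
        then have "g 4 = 3" using f1(6) by simp
        then show ?thesis using h1 h2 h3 by simp
      next
        assume h1: "g 1 = 3"
        then have h2: "g 3 = 1" using f1(2) by simp
        have "g 2 \<noteq> 1" using h2 i[of 2 3] by auto
        moreover have "g 2 \<noteq> 3" using h1 i[of 2 1] by auto
        ultimately have h3: "g 2 = 4" using r1(2) f1(3) by auto
        then have "g 4 = 2" using f1(4) by simp
        then show ?thesis using h1 h2 h3 by simp
      next
        assume h1: "g 1 = 4"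
        then have h2: "g 4 = 1" using f1(2) by simp
        have "g 2 \<noteq> 1" using h2 i[of 2 4] by auto
        moreover have "g 2 \<noteq> 4" using h1 i[of 2 1] by auto
        ultimately have h3: "g 2 = 3" using r1(2) f1(3) by auto
        then have "g 3 = 2" using f1(4) by simp
        then show ?thesis using h1 h2 h3 by simp
      qed
    qed
    then show ?thesis using G_by_values p by blast
  qed
qed

lemma Gk_normal:
  assumes v: "v permutes {1..4}" and g: "g \<in> Gk"
  shows "v \<circ> g \<circ> Hilbert_Choice.inv v \<in> Gk"
proof -
  have gp: "g permutes {1..4}" and gc: "g = id \<or> (\<forall>x\<in>{1..4}. g x \<noteq> x \<and> g (g x) = x)"
    using g Gk_char by auto
  have p: "v \<circ> g \<circ> Hilbert_Choice.inv v permutes {1..4}"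
    by (intro permutes_compose permutes_inv v gp)
  have "v \<circ> g \<circ> Hilbert_Choice.inv v = id \<or> (\<forall>x\<in>{1..4}. (v \<circ> g \<circ> Hilbert_Choice.inv v) x \<noteq> x \<and> (v \<circ> g \<circ> Hilbert_Choice.inv v) ((v \<circ> g \<circ> Hilbert_Choice.inv v) x) = x)"
    using gc
  proof
    assume "g = id" then show ?thesis using permutes_inv_o[OF v] by simp
  next
    assume h: "\<forall>x\<in>{1..4}. g x \<noteq> x \<and> g (g x) = x"
    have "(v \<circ> g \<circ> Hilbert_Choice.inv v) x \<noteq> x \<and> (v \<circ> g \<circ> Hilbert_Choice.inv v) ((v \<circ> g \<circ> Hilbert_Choice.inv v) x) = x" if x: "x \<in> {1..4}" for x
    proof -
      have y: "Hilbert_Choice.inv v x \<in> {1..4}" using x permutes_in_image[OF permutes_inv[OF v]] by blast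
      show ?thesis using h y permutes_inverses[OF v] by (metis comp_apply)
    qed
    then show ?thesis by blast
  qed
  then show ?thesis using Gk_char p by blast
qed

lemma Gk_invol: assumes g: "g \<in> Gk" shows "g \<circ> g = id"
  apply (rule perm_eq4[OF permutes_compose[OF Gk_perm[OF g] Gk_perm[OF g]] permutes_id])
  using Gk_values[OF g] by (elim insertE emptyE; simp)+

lemma Gk_id: "id \<in> Gk" by (simp add: Gk_def)

lemma act_comp: "act (f \<circ> g) A = act f (act g A)"
  by (simp add: act_def image_comp)

lemma act_id: "act id A = A" by (simp add: act_def)

lemma orb_self: "A \<in> orb A"
  unfolding orb_def using Gk_id act_id by (metis image_eqI)

lemma orb_act_G_sub: "g \<in> Gk \<Longrightarrow> orb (act g A) \<subseteq> orb A"
  unfolding orb_def by (auto simp: act_comp[symmetric] intro!: imageI Gk_comp)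

lemma orb_act_G: assumes g: "g \<in> Gk" shows "orb (act g A) = orb A"
proof
  show "orb (act g A) \<subseteq> orb A" by (rule orb_act_G_sub[OF g])
  have "orb A = orb (act g (act g A))" using Gk_invol[OF g] by (simp add: act_comp[symmetric] act_id)
  also have "\<dots> \<subseteq> orb (act g A)" by (rule orb_act_G_sub[OF g])
  finally show "orb A \<subseteq> orb (act g A)" .
qed

lemma orb_mem: assumes "B \<in> orb A" shows "orb B = orb A"
proof -
  obtain g where "g \<in> Gk" "B = act g A" using assms unfolding orb_def by blast
  then show ?thesis using orb_act_G by simp
qed

lemma act_conj:
  assumes v: "v permutes {1..4}"
  shows "act v (act g A) = act (v \<circ> g \<circ> Hilbert_Choice.inv v) (act v A)"
proof -
  have "v \<circ> g \<circ> Hilbert_Choice.inv v \<circ> v = v \<circ> g"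
    using permutes_inv_o(2)[OF v] by (simp add: comp_assoc)
  then show ?thesis by (metis act_comp)
qed

lemma orb_conj:
  assumes v: "v permutes {1..4}" and B: "B \<in> orb A"
  shows "orb (act v B) = orb (act v A)"
proof -
  obtain g where g: "g \<in> Gk" and Bg: "B = act g A" using B unfolding orb_def by blast
  have "act v B = act (v \<circ> g \<circ> Hilbert_Choice.inv v) (act v A)" using act_conj[OF v] Bg by simp
  then show ?thesis using orb_act_G Gk_normal[OF v g] by simp
qed

lemma act_tab:
  assumes v: "v permutes {1..4}" and A: "A \<in> tabloids lam"
  shows "act v A \<in> tabloids lam"
proof -
  have inj: "inj v" using permutes_inj[OF v] .
  have "v ` S \<subseteq> {1..4}" if "S \<subseteq> {1..4}" for S
    using that permutes_in_image[OF v] by blast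
  moreover have "card (v ` S) = card S" for S using inj by (simp add: card_image inj_on_subset)
  moreover have "v ` S \<inter> v ` T = v ` (S \<inter> T)" for S T using inj by (simp add: image_Int)
  ultimately show ?thesis using A unfolding tabloids_def act_def by auto
qed

lemma orb_T4G: "lam \<in> partitions4 \<Longrightarrow> A \<in> tabloids lam \<Longrightarrow> orb A \<in> T4G"
  unfolding T4G_def TG_def by blast

lemma T4G_E:
  assumes "a \<in> T4G"
  obtains lam A where "lam \<in> partitions4" "A \<in> tabloids lam" "a = orb A"
  using assms unfolding T4G_def TG_def by blast

lemma orb_tab: "B \<in> orb A \<Longrightarrow> A \<in> tabloids lam \<Longrightarrow> B \<in> tabloids lam"
  unfolding orb_def using act_tab Gk_perm by blast

lemma hat_orb:
  assumes v: "v permutes {1..4}" and lam: "lam \<in> partitions4" and A: "A \<in> tabloids lam"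
  shows "hat v (orb A) = orb (act v A)"
proof -
  have "orb A \<in> T4G" using orb_T4G[OF lam A] .
  moreover have "(SOME B. B \<in> orb A) \<in> orb A" using orb_self by (rule someI)
  ultimately show ?thesis unfolding hat_def using orb_conj[OF v] by simp
qed

lemma hat_T4G: "v permutes {1..4} \<Longrightarrow> a \<in> T4G \<Longrightarrow> hat v a \<in> T4G"
  by (metis T4G_E hat_orb act_tab orb_T4G)

lemma hat_out: "a \<notin> T4G \<Longrightarrow> hat v a = a"
  by (simp add: hat_def)

lemma hat_comp:
  assumes v: "v permutes {1..4}" and u: "u permutes {1..4}"
  shows "hat v (hat u a) = hat (v \<circ> u) a"
proof (cases "a \<in> T4G")
  case True
  then obtain lam A where lam: "lam \<in> partitions4" and A: "A \<in> tabloids lam" and a: "a = orb A"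
    by (rule T4G_E)
  have "hat v (hat u a) = hat v (orb (act u A))" using hat_orb[OF u lam A] a by simp
  also have "\<dots> = orb (act v (act u A))" using hat_orb[OF v lam act_tab[OF u A]] .
  also have "\<dots> = hat (v \<circ> u) a" using hat_orb[OF permutes_compose[OF u v] lam A] a
    by (simp add: act_comp)
  finally show ?thesis .
next
  case False then show ?thesis by (simp add: hat_out)
qed

lemma hat_comp_fun:
  "v permutes {1..4} \<Longrightarrow> u permutes {1..4} \<Longrightarrow> hat (v \<circ> u) = hat v \<circ> hat u"
  using hat_comp by (auto simp: fun_eq_iff)

lemma hat_G: assumes g: "g \<in> Gk" shows "hat g = id"
proof
  fix a show "hat g a = id a"
  proof (cases "a \<in> T4G")
    case True
    then obtain lam A where lam: "lam \<in> partitions4" and A: "A \<in> tabloids lam" and a: "a = orb A"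
      by (rule T4G_E)
    show ?thesis using hat_orb[OF Gk_perm[OF g] lam A] orb_act_G[OF g] a by simp
  qed (simp add: hat_out)
qed

lemma hat_id: "hat id = id" using hat_G Gk_id by blast

lemma hat_inv:
  assumes v: "v permutes {1..4}"
  shows "hat (Hilbert_Choice.inv v) (hat v a) = a" "hat v (hat (Hilbert_Choice.inv v) a) = a"
  using hat_comp[OF permutes_inv[OF v] v] hat_comp[OF v permutes_inv[OF v]]
    permutes_inv_o[OF v] hat_id by simp_all

lemma tab_le_act: "tab_le A B \<Longrightarrow> tab_le (act v A) (act v B)"
proof -
  have e: "\<Union>(set (take i (act v X))) = v ` \<Union>(set (take i X))" for i X
    by (simp add: act_def take_map image_Union)
  assume "tab_le A B" then show ?thesis unfolding tab_le_def e by (meson image_mono)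
qed

lemma orb_le_hat:
  assumes v: "v permutes {1..4}" and a: "a \<in> T4G" and b: "b \<in> T4G" and le: "orb_le a b"
  shows "orb_le (hat v a) (hat v b)"
proof -
  obtain A B where A: "A \<in> a" and B: "B \<in> b" and AB: "tab_le A B" using le orb_le_def by blast
  obtain lam A0 where lam: "lam \<in> partitions4" and A0: "A0 \<in> tabloids lam" and a0: "a = orb A0"
    using a by (rule T4G_E)
  obtain mu B0 where mu: "mu \<in> partitions4" and B0: "B0 \<in> tabloids mu" and b0: "b = orb B0"
    using b by (rule T4G_E)
  have "hat v a = orb (act v A)"
    using hat_orb[OF v lam orb_tab[OF _ A0]] A a0 orb_mem by metis
  moreover have "hat v b = orb (act v B)"
    using hat_orb[OF v mu orb_tab[OF _ B0]] B b0 orb_mem by metis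
  ultimately show ?thesis unfolding orb_le_def using orb_self tab_le_act[OF AB] by blast
qed

lemma hat_Aut0:
  assumes v: "v permutes {1..4}"
  shows "hat v \<in> Aut0"
proof -
  have vi: "Hilbert_Choice.inv v permutes {1..4}" using permutes_inv[OF v] .
  have bij: "bij_betw (hat v) T4G T4G"
    by (rule bij_betw_byWitness[where f'="hat (Hilbert_Choice.inv v)"])
       (auto simp: hat_inv[OF v] intro: hat_T4G v vi)
  have ord: "orb_le (hat v a) (hat v b) \<longleftrightarrow> orb_le a b" if a: "a \<in> T4G" and b: "b \<in> T4G" for a b
  proof
    assume "orb_le (hat v a) (hat v b)"
    from orb_le_hat[OF vi hat_T4G[OF v a] hat_T4G[OF v b] this] show "orb_le a b"
      by (simp add: hat_inv[OF v])
  qed (rule orb_le_hat[OF v a b])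
  have tg: "hat v ` TG mu = TG mu" if mu: "mu \<in> partitions4" for mu
  proof -
    have sub: "hat w ` TG mu \<subseteq> TG mu" if w: "w permutes {1..4}" for w
    proof
      fix x assume "x \<in> hat w ` TG mu"
      then obtain A where A: "A \<in> tabloids mu" and x: "x = hat w (orb A)" unfolding TG_def by blast
      show "x \<in> TG mu" using x hat_orb[OF w mu A] act_tab[OF w A] unfolding TG_def by blast
    qed
    have "TG mu \<subseteq> hat v ` TG mu"
    proof
      fix x assume x: "x \<in> TG mu"
      then have "hat (Hilbert_Choice.inv v) x \<in> TG mu" using sub[OF vi] by blast
      then show "x \<in> hat v ` TG mu" using hat_inv(2)[OF v, of x] by (metis image_eqI)
    qed
    then show ?thesis using sub[OF v] by blast
  qed
  show ?thesis unfolding Aut0_def using bij ord tg hat_out by blast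
qed

lemma part1111: "[1,1,1,1] \<in> partitions4" by (simp add: partitions4_def)
lemma part22: "[2,2] \<in> partitions4" by (simp add: partitions4_def)
lemma part211: "[2,1,1] \<in> partitions4" by (simp add: partitions4_def)

lemma perm_eq_on:
  fixes r g :: "nat \<Rightarrow> nat"
  assumes "r permutes {1..4}" "g permutes {1..4}" "\<And>x. x \<in> {1..4} \<Longrightarrow> r x = g x"
  shows "r = g"
  using perm_eq4[OF assms(1,2)] assms(3) by simp

lemma all_four: "{a,b,c,d} = {1..4::nat}"
  if "distinct [a,b,c,d]" "a \<in> {1..4}" "b \<in> {1..4}" "c \<in> {1..4}" "d \<in> {1..4}"
proof (rule card_subset_eq)
  show "finite {1..4::nat}" by simp
  show "{a,b,c,d} \<subseteq> {1..4}" using that by auto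
  show "card {a,b,c,d} = card {1..4::nat}" using that by simp
qed

lemma all4: "(\<forall>i<(4::nat). R i) \<longleftrightarrow> R 0 \<and> R 1 \<and> R 2 \<and> R 3"
  by (auto simp: numeral_eq_Suc less_Suc_eq)

lemma allSuc: "(\<forall>i<Suc n. R i) \<longleftrightarrow> R 0 \<and> (\<forall>i<n. R (Suc i))"
  by (auto simp: less_Suc_eq_0_disj)

lemma tab1111:
  assumes "distinct [a,b,c,d]" "a \<in> {1..4}" "b \<in> {1..4}" "c \<in> {1..4}" "d \<in> {1..4}"
  shows "[{a},{b},{c},{d}] \<in> tabloids [1,1,1,1]"
  using assms unfolding tabloids_def by (simp add: allSuc)

lemma tab1111_E:
  assumes A: "A \<in> tabloids [1,1,1,1]"
  obtains a b c d where "A = [{a},{b},{c},{d}]" "distinct [a,b,c,d]"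
    "a \<in> {1..4}" "b \<in> {1..4}" "c \<in> {1..4}" "d \<in> {1..4}"
proof -
  have len: "length A = 4" using A by (simp add: tabloids_def)
  have "\<exists>x0 x1 x2 x3. A = [x0,x1,x2,x3]" using len by (auto simp: numeral_eq_Suc length_Suc_conv)
  then obtain x0 x1 x2 x3 where Ax: "A = [x0,x1,x2,x3]" by blast
  have c: "\<forall>i<4. A ! i \<subseteq> {1..4} \<and> card (A ! i) = [1,1,1,1::nat] ! i" using A len by (simp add: tabloids_def)
  have dj: "\<forall>i<4. \<forall>j<4. i \<noteq> j \<longrightarrow> A ! i \<inter> A ! j = {}" using A len by (simp add: tabloids_def)
  have c0: "x0 \<subseteq> {1..4}" "card x0 = 1" and c1: "x1 \<subseteq> {1..4}" "card x1 = 1"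
    and c2: "x2 \<subseteq> {1..4}" "card x2 = 1" and c3: "x3 \<subseteq> {1..4}" "card x3 = 1"
    using c unfolding all4 Ax by simp_all
  obtain a where a: "x0 = {a}" using c0(2) card_1_singletonE by blast
  obtain b where b: "x1 = {b}" using c1(2) card_1_singletonE by blast
  obtain c where cc: "x2 = {c}" using c2(2) card_1_singletonE by blast
  obtain d where d: "x3 = {d}" using c3(2) card_1_singletonE by blast
  have "distinct [a,b,c,d]" using dj unfolding Ax a b cc d
    by (simp add: all4)
  then show ?thesis using that Ax a b cc d c0 c1 c2 c3 by simp
qed

definition Tor :: "nat \<Rightarrow> nat \<Rightarrow> nat \<Rightarrow> nat \<Rightarrow> nat set list set" where
  "Tor a b c d = orb [{a},{b},{c},{d}]"

lemma act4: "act v [{a},{b},{c},{d}] = [{v a},{v b},{v c},{v d}]"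
  by (simp add: act_def)

lemma hat_Tor:
  assumes v: "v permutes {1..4}" and "distinct [a,b,c,d]" "a \<in> {1..4}" "b \<in> {1..4}" "c \<in> {1..4}" "d \<in> {1..4}"
  shows "hat v (Tor a b c d) = Tor (v a) (v b) (v c) (v d)"
  unfolding Tor_def using hat_orb[OF v part1111 tab1111[OF assms(2-)]] by (simp add: act4)

lemma Tor_G: "g \<in> Gk \<Longrightarrow> Tor (g a) (g b) (g c) (g d) = Tor a b c d"
  unfolding Tor_def using orb_act_G[of g "[{a},{b},{c},{d}]"] by (simp add: act4)

lemma Tor_E:
  assumes "Tor a' b' c' d' = Tor a b c d"
  obtains g where "g \<in> Gk" "a' = g a" "b' = g b" "c' = g c" "d' = g d"
proof -
  have "[{a'},{b'},{c'},{d'}] \<in> orb [{a},{b},{c},{d}]" using assms orb_self unfolding Tor_def by metis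
  then obtain g where "g \<in> Gk" "[{a'},{b'},{c'},{d'}] = act g [{a},{b},{c},{d}]" unfolding orb_def by blast
  then show ?thesis using that by (simp add: act4)
qed

lemma fixT:
  assumes v: "v permutes {1..4}" and "distinct [a,b,c,d]" "a \<in> {1..4}" "b \<in> {1..4}" "c \<in> {1..4}" "d \<in> {1..4}"
    and eq: "Tor (v a) (v b) (v c) (v d) = Tor a b c d"
  shows "v \<in> Gk"
proof -
  obtain g where g: "g \<in> Gk" "v a = g a" "v b = g b" "v c = g c" "v d = g d" using eq by (rule Tor_E)
  have "v = g"
  proof (rule perm_eq_on[OF v Gk_perm[OF g(1)]])
    fix x :: nat assume "x \<in> {1..4}"
    then have "x \<in> {a,b,c,d}" using all_four[OF assms(2-6)] by simp
    then show "v x = g x" using g by auto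
  qed
  then show ?thesis using g by simp
qed

lemma fix1111:
  assumes v: "v permutes {1..4}" and x: "x \<in> TG [1,1,1,1]" and h: "hat v x = x"
  shows "v \<in> Gk"
proof -
  obtain A where A: "A \<in> tabloids [1,1,1,1]" and xA: "x = orb A" using x unfolding TG_def by blast
  obtain a b c d where Ae: "A = [{a},{b},{c},{d}]" and abcd: "distinct [a,b,c,d]"
    "a \<in> {1..4}" "b \<in> {1..4}" "c \<in> {1..4}" "d \<in> {1..4}" using A by (rule tab1111_E)
  have "x = Tor a b c d" using xA Ae Tor_def by simp
  then show ?thesis using h hat_Tor[OF v abcd] fixT[OF v abcd] by simp
qed

lemma conj_image:
  assumes v: "v permutes {1..4}"
  shows "(\<lambda>g. v \<circ> g \<circ> Hilbert_Choice.inv v) ` Gk = Gk"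
proof
  show "(\<lambda>g. v \<circ> g \<circ> Hilbert_Choice.inv v) ` Gk \<subseteq> Gk" using Gk_normal[OF v] by blast
  show "Gk \<subseteq> (\<lambda>g. v \<circ> g \<circ> Hilbert_Choice.inv v) ` Gk"
  proof
    fix g assume g: "g \<in> Gk"
    have vi: "Hilbert_Choice.inv v permutes {1..4}" using permutes_inv[OF v] .
    have ii: "Hilbert_Choice.inv (Hilbert_Choice.inv v) = v" using inv_inv_eq[OF permutes_bij[OF v]] .
    let ?h = "Hilbert_Choice.inv v \<circ> g \<circ> v"
    have h: "?h \<in> Gk" using Gk_normal[OF vi g] ii by simp
    have "v \<circ> ?h \<circ> Hilbert_Choice.inv v = (v \<circ> Hilbert_Choice.inv v) \<circ> g \<circ> (v \<circ> Hilbert_Choice.inv v)"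
      by (simp add: comp_assoc)
    also have "\<dots> = g" using permutes_inv_o(1)[OF v] by simp
    finally show "g \<in> (\<lambda>g. v \<circ> g \<circ> Hilbert_Choice.inv v) ` Gk" using h by (metis image_eqI)
  qed
qed

lemma hat_hom: "hat \<in> hom (sym_group 4) aut0_group"
  unfolding hom_def sym_group_def aut0_group_def
  using hat_Aut0 hat_comp_fun by auto

lemma kernel_hat: "kernel (sym_group 4) aut0_group hat = Gk"
proof
  show "kernel (sym_group 4) aut0_group hat \<subseteq> Gk"
  proof
    fix v assume "v \<in> kernel (sym_group 4) aut0_group hat"
    then have v: "v permutes {1..4}" and h: "hat v = id"
      unfolding kernel_def sym_group_def aut0_group_def by auto
    have "Tor 1 2 3 4 \<in> TG [1,1,1,1]" unfolding TG_def Tor_def using tab1111[of 1 2 3 4] by auto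
    then show "v \<in> Gk" using fix1111[OF v] h by simp
  qed
  show "Gk \<subseteq> kernel (sym_group 4) aut0_group hat"
    unfolding kernel_def sym_group_def aut0_group_def using Gk_perm hat_G by auto
qed

lemma compl_ex:
  fixes i j k l :: nat
  assumes "i \<in> {1..4}" "j \<in> {1..4}" "i \<noteq> j"
  shows "\<exists>k\<in>{1..4}. \<exists>l\<in>{1..4}. distinct [i,j,k,l]"
proof -
  have "card ({1..4} - {i,j}) = card {1..4::nat} - card {i,j}"
    by (rule card_Diff_subset) (use assms in auto)
  then have "card ({1..4} - {i,j}) = 2" using assms(3) by simp
  then obtain k l where kl: "{1..4} - {i,j} = {k,l}" "k \<noteq> l" by (auto simp: card_2_iff)
  then have "k \<in> {1..4}" "l \<in> {1..4}" "k \<notin> {i,j}" "l \<notin> {i,j}" by blast+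
  then show ?thesis using kl(2) assms(3)
    by (intro bexI[where x=k] bexI[where x=l]) auto
qed

lemma dbl_G:
  fixes a b c d :: nat
  assumes "distinct [a,b,c,d]" "a \<in> {1..4}" "b \<in> {1..4}" "c \<in> {1..4}" "d \<in> {1..4}"
  shows "transpose a b \<circ> transpose c d \<in> Gk"
proof -
  have p: "transpose a b \<circ> transpose c d permutes {1..4}"
    using assms by (intro permutes_compose permutes_swap_id) auto
  have "(transpose a b \<circ> transpose c d) x \<noteq> x \<and> (transpose a b \<circ> transpose c d) ((transpose a b \<circ> transpose c d) x) = x"
    if "x \<in> {1..4}" for x
  proof -
    have "x \<in> {a,b,c,d}" using that all_four[OF assms] by simp
    then consider "x = a" | "x = b" | "x = c" | "x = d" by blast
    then show ?thesis using assms(1) by cases (simp_all add: transpose_def)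
  qed
  then show ?thesis using Gk_char p by blast
qed

lemma diff_pair:
  fixes i j k l :: nat
  assumes "distinct [i,j,k,l]" "i \<in> {1..4}" "j \<in> {1..4}" "k \<in> {1..4}" "l \<in> {1..4}"
  shows "{1..4} - {i,j} = {k,l}"
  using all_four[OF assms] assms(1) by auto

lemma P_alt:
  fixes i j k l :: nat
  assumes "distinct [i,j,k,l]" "i \<in> {1..4}" "j \<in> {1..4}" "k \<in> {1..4}" "l \<in> {1..4}"
  shows "P i j = orb [{i,j},{k,l}]"
  unfolding P_def diff_pair[OF assms] ..

lemma P_tab:
  fixes i j k l :: nat
  assumes "distinct [i,j,k,l]" "i \<in> {1..4}" "j \<in> {1..4}" "k \<in> {1..4}" "l \<in> {1..4}"
  shows "[{i,j},{k,l}] \<in> tabloids [2,2]"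
  using assms unfolding tabloids_def by (simp add: allSuc)

lemma Q_tab:
  fixes i j k l :: nat
  assumes "distinct [i,j,k,l]" "i \<in> {1..4}" "j \<in> {1..4}" "k \<in> {1..4}" "l \<in> {1..4}"
  shows "[{i,j},{k},{l}] \<in> tabloids [2,1,1]"
  using assms unfolding tabloids_def by (simp add: allSuc)

lemma distinct_perm:
  fixes i j k l :: nat
  assumes v: "v permutes {1..4}" and "distinct [i,j,k,l]" "i \<in> {1..4}" "j \<in> {1..4}" "k \<in> {1..4}" "l \<in> {1..4}"
  shows "distinct [v i, v j, v k, v l]" "v i \<in> {1..4}" "v j \<in> {1..4}" "v k \<in> {1..4}" "v l \<in> {1..4}"
  using assms permutes_inj[OF v] permutes_in_image[OF v] by (auto dest: injD)

lemma Q_swap: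
  fixes i j k l :: nat
  assumes "distinct [i,j,k,l]" "i \<in> {1..4}" "j \<in> {1..4}" "k \<in> {1..4}" "l \<in> {1..4}"
  shows "orb [{i,j},{l},{k}] = orb [{i,j},{k},{l}]"
proof -
  have g: "transpose i j \<circ> transpose k l \<in> Gk" by (rule dbl_G[OF assms])
  have "act (transpose i j \<circ> transpose k l) [{i,j},{k},{l}] = [{i,j},{l},{k}]"
    using assms(1) by (simp add: act_def transpose_def insert_commute)
  note e = orb_act_G[OF g, of "[{i,j},{k},{l}]"]
  then show ?thesis unfolding \<open>act _ _ = _\<close> .
qed

lemma Q_alt:
  fixes i j k l :: nat
  assumes "distinct [i,j,k,l]" "i \<in> {1..4}" "j \<in> {1..4}" "k \<in> {1..4}" "l \<in> {1..4}"
  shows "Q i j = orb [{i,j},{k},{l}]"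
proof (cases "k < l")
  case True
  then show ?thesis unfolding Q_def diff_pair[OF assms] by simp
next
  case False
  then have "l < k" using assms(1) by simp
  then have "Q i j = orb [{i,j},{l},{k}]" unfolding Q_def diff_pair[OF assms]
    by (simp add: insert_commute)
  then show ?thesis using Q_swap[OF assms] by simp
qed

lemma hat_P0:
  fixes i j k l :: nat
  assumes v: "v permutes {1..4}" and a: "distinct [i,j,k,l]" "i \<in> {1..4}" "j \<in> {1..4}" "k \<in> {1..4}" "l \<in> {1..4}"
  shows "hat v (P i j) = P (v i) (v j)"
  using hat_orb[OF v part22 P_tab[OF a]] P_alt[OF a] P_alt[OF distinct_perm[OF v a]]
  by (simp add: act_def)

lemma hat_Q0:
  fixes i j k l :: nat
  assumes v: "v permutes {1..4}" and a: "distinct [i,j,k,l]" "i \<in> {1..4}" "j \<in> {1..4}" "k \<in> {1..4}" "l \<in> {1..4}"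
  shows "hat v (Q i j) = Q (v i) (v j)"
  using hat_orb[OF v part211 Q_tab[OF a]] Q_alt[OF a] Q_alt[OF distinct_perm[OF v a]]
  by (simp add: act_def)

lemma hat_PQ:
  fixes i j k l :: nat
  assumes v: "v permutes {1..4}" and "i \<in> {1..4}" "j \<in> {1..4}" "i \<noteq> j"
  shows "hat v (P i j) = P (v i) (v j) \<and> hat v (Q i j) = Q (v i) (v j)"
proof -
  obtain k l where "k \<in> {1..4}" "l \<in> {1..4}" "distinct [i,j,k,l]" using compl_ex[OF assms(2-4)] by blast
  then show ?thesis using hat_P0[OF v] hat_Q0[OF v] assms by blast
qed

lemma P_sym:
  fixes i j k l :: nat
  assumes a: "distinct [i,j,k,l]" "i \<in> {1..4}" "j \<in> {1..4}" "k \<in> {1..4}" "l \<in> {1..4}"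
  shows "P i j = P k l"
proof -
  have a2: "distinct [k,l,i,j]" using a(1) by auto
  have g: "transpose i k \<circ> transpose j l \<in> Gk" by (rule dbl_G) (use a in auto)
  have "act (transpose i k \<circ> transpose j l) [{i,j},{k,l}] = [{k,l},{i,j}]"
    using a(1) by (simp add: act_def transpose_def insert_commute)
  note e = orb_act_G[OF g, of "[{i,j},{k,l}]"]
  then have "orb [{k,l},{i,j}] = orb [{i,j},{k,l}]" unfolding \<open>act _ _ = _\<close> .
  then show ?thesis using P_alt[OF a] P_alt[OF a2 a(4,5,2,3)] by simp
qed

lemma Q_sym:
  fixes i j k l :: nat
  assumes a: "distinct [i,j,k,l]" "i \<in> {1..4}" "j \<in> {1..4}" "k \<in> {1..4}" "l \<in> {1..4}"
  shows "Q i j = Q k l"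
proof -
  have a2: "distinct [k,l,i,j]" using a(1) by auto
  have g: "transpose i k \<circ> transpose j l \<in> Gk" by (rule dbl_G) (use a in auto)
  have "act (transpose i k \<circ> transpose j l) [{i,j},{k},{l}] = [{k,l},{i},{j}]"
    using a(1) by (simp add: act_def transpose_def insert_commute)
  note e = orb_act_G[OF g, of "[{i,j},{k},{l}]"]
  then have "orb [{k,l},{i},{j}] = orb [{i,j},{k},{l}]" unfolding \<open>act _ _ = _\<close> .
  then show ?thesis using Q_alt[OF a] Q_alt[OF a2 a(4,5,2,3)] by simp
qed

lemma P_comm: "P i j = P j i" unfolding P_def by (simp add: insert_commute)
lemma Q_comm: "Q i j = Q j i" unfolding Q_def by (simp add: insert_commute)

lemma three: "{1..3::nat} = {1,2,3}" by auto

lemma P_eq: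
  fixes a b c d :: nat
  assumes "a \<noteq> b" "c \<noteq> d" "a \<in> {1..4}" "b \<in> {1..4}" "c \<in> {1..4}" "d \<in> {1..4}"
    and eq: "P a b = P c d"
  shows "{a,b} = {c,d} \<or> {a,b} \<inter> {c,d} = {}"
proof -
  have "[{a,b}, {1..4} - {a,b}] \<in> P c d" using eq orb_self unfolding P_def by metis
  then obtain g where g: "g \<in> Gk" and ab: "{a,b} = {g c, g d}" unfolding P_def orb_def act_def by auto
  have "g = id \<or> (\<forall>x\<in>{1..4}. g x \<noteq> x \<and> g (g x) = x)" using g Gk_char by blast
  then show ?thesis
  proof
    assume "g = id" then show ?thesis using ab by simp
  next
    assume f: "\<forall>x\<in>{1..4}. g x \<noteq> x \<and> g (g x) = x"
    then have f1: "g c \<noteq> c" "g (g c) = c" "g d \<noteq> d" "g (g d) = d" using assms by auto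
    show ?thesis
    proof (cases "g c = d")
      case True then show ?thesis using f1 ab by auto
    next
      case False
      have "g d \<noteq> c" using False f1 by metis
      then show ?thesis using False f1 ab by auto
    qed
  qed
qed

lemma P_three:
  fixes a b :: nat
  assumes "a \<in> {1..4}" "b \<in> {1..4}" "a \<noteq> b"
  shows "\<exists>z\<in>{1,2,3}. P a b = P z 4"
proof -
  obtain k l where kl: "k \<in> {1..4}" "l \<in> {1..4}" "distinct [a,b,k,l]" using compl_ex[OF assms] by blast
  have "4 \<in> {a,b,k,l}" using all_four[OF kl(3) assms(1,2) kl(1,2)] by simp
  then consider "a = 4" | "b = 4" | "k = 4" | "l = 4" by blast
  then show ?thesis
  proof cases
    case 1
    then have "b \<in> {1,2,3}" using assms by auto
    moreover have "P a b = P b 4" using 1 P_comm[of a b] by simp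
    ultimately show ?thesis by blast
  next
    case 2
    then have "a \<in> {1,2,3}" using assms by auto
    moreover have "P a b = P a 4" using 2 by simp
    ultimately show ?thesis by blast
  next
    case 3
    then have "l \<in> {1,2,3}" using kl by auto
    moreover have "P a b = P l 4" using 3 P_sym[OF kl(3) assms(1,2) kl(1,2)] P_comm[of k l] by simp
    ultimately show ?thesis by blast
  next
    case 4
    then have "k \<in> {1,2,3}" using kl by auto
    moreover have "P a b = P k 4" using 4 P_sym[OF kl(3) assms(1,2) kl(1,2)] by simp
    ultimately show ?thesis by blast
  qed
qed

lemma P_inj3:
  fixes x y :: nat
  assumes "x \<in> {1,2,3}" "y \<in> {1,2,3}" "P x 4 = P y 4"
  shows "x = y"
proof -
  have "{x,4} = {y,4} \<or> {x,4} \<inter> {y,4} = {}"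
    by (rule P_eq[OF _ _ _ _ _ _ assms(3)]) (use assms(1,2) in auto)
  moreover have "x \<noteq> 4" "y \<noteq> 4" using assms(1,2) by auto
  ultimately show ?thesis by blast
qed

definition pidx :: "nat set list set \<Rightarrow> nat" where
  "pidx a = (if a = P 1 4 then 1 else if a = P 2 4 then 2 else 3)"

lemma pidx_P: assumes "z \<in> {1,2,3}" shows "pidx (P z 4) = z"
proof -
  have n: "P 2 4 \<noteq> P 1 4" "P 3 4 \<noteq> P 1 4" "P 3 4 \<noteq> P 2 4"
    using P_inj3[of 2 1] P_inj3[of 3 1] P_inj3[of 3 2] by auto
  from assms show ?thesis unfolding pidx_def using n by (elim insertE emptyE) simp_all
qed

definition Phi :: "(nat set list set \<Rightarrow> nat set list set) \<Rightarrow> nat \<Rightarrow> nat" where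
  "Phi f = (\<lambda>x. if x \<in> {1..3} then pidx (f (P x 4)) else x)"

lemma Phi_hat:
  assumes v: "v permutes {1..4}" and x: "x \<in> {1,2,3}"
  shows "Phi (hat v) x \<in> {1,2,3} \<and> P (Phi (hat v) x) 4 = hat v (P x 4)"
proof -
  have x4: "x \<in> {1..4}" "(4::nat) \<in> {1..4}" "x \<noteq> 4" using x by auto
  have h: "hat v (P x 4) = P (v x) (v 4)" using hat_PQ[OF v x4] by blast
  have vx: "v x \<in> {1..4}" "v 4 \<in> {1..4}" "v x \<noteq> v 4"
    using x4 permutes_in_image[OF v] permutes_inj[OF v] by (auto dest: injD)
  obtain z where z: "z \<in> {1,2,3}" "P (v x) (v 4) = P z 4" using P_three[OF vx] by blast
  have "x \<in> {1..3}" using x by auto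
  then have "Phi (hat v) x = pidx (hat v (P x 4))" by (simp add: Phi_def)
  also have "\<dots> = z" using h z pidx_P by simp
  finally show ?thesis using z h by simp
qed

lemma Phi_out: "x \<notin> {1,2,3} \<Longrightarrow> Phi f x = x"
  unfolding Phi_def three by simp

lemma Phi_id: "Phi id = id"
proof
  fix x :: nat show "Phi id x = id x"
  proof (cases "x \<in> {1,2,3}")
    case True then have "x \<in> {1..3}" by auto
    then show ?thesis using pidx_P[OF True] by (simp add: Phi_def)
  qed (simp add: Phi_out)
qed

lemma Phi_hat_perm:
  assumes v: "v permutes {1..4}"
  shows "Phi (hat v) permutes {1..3}"
proof -
  have inj: "inj_on (Phi (hat v)) {1,2,3}"
  proof (rule inj_onI)
    fix x y :: nat assume x: "x \<in> {1,2,3}" and y: "y \<in> {1,2,3}" and e: "Phi (hat v) x = Phi (hat v) y"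
    then have "hat v (P x 4) = hat v (P y 4)" using Phi_hat[OF v x] Phi_hat[OF v y] by metis
    then have "hat (Hilbert_Choice.inv v) (hat v (P x 4)) = hat (Hilbert_Choice.inv v) (hat v (P y 4))" by simp
    then have "P x 4 = P y 4" using hat_inv(1)[OF v] by simp
    then show "x = y" using P_inj3 x y by blast
  qed
  have sub: "Phi (hat v) ` {1,2,3} \<subseteq> {1,2,3}" using Phi_hat[OF v] by blast
  have "Phi (hat v) ` {1,2,3} = {1,2,3}" by (rule endo_inj_surj[OF _ sub inj]) simp
  then have "bij_betw (Phi (hat v)) {1,2,3} {1,2,3}" using inj by (simp add: bij_betw_def)
  then show ?thesis unfolding three by (rule bij_imp_permutes) (simp add: Phi_out)
qed

lemma Phi_hom:
  assumes v: "v permutes {1..4}" and u: "u permutes {1..4}"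
  shows "Phi (hat v \<circ> hat u) = Phi (hat v) \<circ> Phi (hat u)"
proof
  fix x :: nat
  show "Phi (hat v \<circ> hat u) x = (Phi (hat v) \<circ> Phi (hat u)) x"
  proof (cases "x \<in> {1,2,3}")
    case True
    have vu: "v \<circ> u permutes {1..4}" using permutes_compose[OF u v] .
    obtain y where y: "y = Phi (hat u) x" by blast
    have y3: "y \<in> {1,2,3}" "P y 4 = hat u (P x 4)" using Phi_hat[OF u True] y by auto
    have "P (Phi (hat (v \<circ> u)) x) 4 = hat v (hat u (P x 4))"
      using Phi_hat[OF vu True] hat_comp[OF v u] by simp
    also have "\<dots> = P (Phi (hat v) y) 4" using y3 Phi_hat[OF v y3(1)] by simp
    finally have "Phi (hat (v \<circ> u)) x = Phi (hat v) y"
      using P_inj3 Phi_hat[OF vu True] Phi_hat[OF v y3(1)] by blast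
    then show ?thesis using y hat_comp_fun[OF v u] by simp
  next
    case False then show ?thesis by (simp add: Phi_out)
  qed
qed

lemma fixP:
  assumes r: "r permutes {1..4}" and fx: "\<And>x. x \<in> {1,2,3} \<Longrightarrow> hat r (P x 4) = P x 4"
  shows "r \<in> Gk"
proof -
  have rin: "r x \<in> {1,2,3,4}" if "x \<in> {1,2,3,4}" for x
    using permutes_in_image[OF r] that four by auto
  have i: "r x \<noteq> r y" if "x \<noteq> y" for x y using permutes_inj[OF r] that by (auto dest: injD)
  have c: "{r x, r 4} = {x,4} \<or> {r x, r 4} \<inter> {x,4} = {}" if x: "x \<in> {1,2,3}" for x
  proof -
    have "P (r x) (r 4) = P x 4" using fx[OF x] hat_PQ[OF r] x by auto
    moreover have "r x \<in> {1..4}" "r 4 \<in> {1..4}" "x \<in> {1..4}" using rin x four by auto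
    moreover have "r x \<noteq> r 4" "x \<noteq> 4" using i[of x 4] x by auto
    ultimately show ?thesis by (intro P_eq) auto
  qed
  have La: "r x = x" if "r 4 = 4" "x \<in> {1,2,3}" for x
  proof -
    have "r x \<noteq> 4" using i[of x 4] that by auto
    then show ?thesis using c[OF that(2)] that by (auto simp: doubleton_eq_iff)
  qed
  have Lb: "r x \<noteq> x \<and> r x \<noteq> 4 \<and> r x \<noteq> r 4" if "r 4 \<noteq> 4" "r 4 \<noteq> x" "x \<in> {1,2,3}" for x
  proof -
    have "r x \<noteq> r 4" using i[of x 4] that by auto
    moreover have "{r x, r 4} \<noteq> {x,4}" using that by (auto simp: doubleton_eq_iff)
    ultimately show ?thesis using c[OF that(3)] by auto
  qed
  have Lc: "r x = 4" if "r 4 = x" "x \<in> {1,2,3}" for x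
  proof -
    have "r x \<noteq> x" using i[of x 4] that by auto
    moreover have "{r x, x} \<inter> {x,4} \<noteq> {}" by auto
    ultimately show ?thesis using c[OF that(2)] that by (auto simp: doubleton_eq_iff)
  qed
  have r1: "r 1 \<in> {1,2,3,4}" "r 2 \<in> {1,2,3,4}" "r 3 \<in> {1,2,3,4}" "r 4 \<in> {1,2,3,4}" using rin by auto
  have "(r 1, r 2, r 3, r 4) \<in> {(1,2,3,4),(2,1,4,3),(3,4,1,2),(4,3,2,1)}"
    using r1(4)
  proof (elim insertE emptyE)
    assume h: "r 4 = 1"
    have "r 1 = 4" using Lc[of 1] h by simp
    moreover have "r 2 = 3" using Lb[of 2] h r1(2) by auto
    moreover have "r 3 = 2" using Lb[of 3] h r1(3) by auto
    ultimately show ?thesis using h by simp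
  next
    assume h: "r 4 = 2"
    have "r 2 = 4" using Lc[of 2] h by simp
    moreover have "r 1 = 3" using Lb[of 1] h r1(1) by auto
    moreover have "r 3 = 1" using Lb[of 3] h r1(3) by auto
    ultimately show ?thesis using h by simp
  next
    assume h: "r 4 = 3"
    have "r 3 = 4" using Lc[of 3] h by simp
    moreover have "r 1 = 2" using Lb[of 1] h r1(1) by auto
    moreover have "r 2 = 1" using Lb[of 2] h r1(2) by auto
    ultimately show ?thesis using h by simp
  next
    assume h: "r 4 = 4"
    then show ?thesis using La[of 1] La[of 2] La[of 3] by simp
  qed
  then show ?thesis using G_by_values[OF r] by blast
qed

lemma Phi_inj:
  assumes v: "v permutes {1..4}" and u: "u permutes {1..4}" and e: "Phi (hat v) = Phi (hat u)"
  shows "hat v = hat u"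
proof -
  have ui: "Hilbert_Choice.inv u permutes {1..4}" using permutes_inv[OF u] .
  define r where "r = Hilbert_Choice.inv u \<circ> v"
  have r: "r permutes {1..4}" unfolding r_def using permutes_compose[OF v ui] .
  have "Phi (hat r) = Phi (hat (Hilbert_Choice.inv u)) \<circ> Phi (hat v)"
    unfolding r_def hat_comp_fun[OF ui v] Phi_hom[OF ui v] ..
  also have "\<dots> = Phi (hat (Hilbert_Choice.inv u)) \<circ> Phi (hat u)" using e by simp
  also have "\<dots> = Phi (hat (Hilbert_Choice.inv u \<circ> u))"
    unfolding hat_comp_fun[OF ui u] Phi_hom[OF ui u] ..
  also have "\<dots> = id" using permutes_inv_o(2)[OF u] hat_id Phi_id by simp
  finally have pr: "Phi (hat r) = id" .
  have "hat r (P x 4) = P x 4" if x: "x \<in> {1,2,3}" for x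
    using Phi_hat[OF r x] pr by simp
  then have "r \<in> Gk" using fixP[OF r] by blast
  then have hr: "hat r = id" by (rule hat_G)
  have "u \<circ> r = v" unfolding r_def using permutes_inv_o(1)[OF u] by (simp add: comp_assoc[symmetric])
  then have "hat v = hat u \<circ> hat r" using hat_comp_fun[OF u r] by simp
  then show ?thesis using hr by simp
qed

lemma Phi_surj:
  assumes p: "p permutes {1..3}"
  shows "Phi (hat p) = p"
proof
  have p4: "p permutes {1..4}" using permutes_subset[OF p] by auto
  fix x :: nat
  show "Phi (hat p) x = p x"
  proof (cases "x \<in> {1,2,3}")
    case True
    have p44: "p 4 = 4" using permutes_not_in[OF p] by simp
    have px: "p x \<in> {1,2,3}" using permutes_in_image[OF p] True three by auto
    have "P (Phi (hat p) x) 4 = hat p (P x 4)" using Phi_hat[OF p4 True] by simp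
    also have "\<dots> = P (p x) (p 4)" using hat_PQ[OF p4] True by auto
    finally have "P (Phi (hat p) x) 4 = P (p x) 4" using p44 by simp
    then show ?thesis using P_inj3 px Phi_hat[OF p4 True] by blast
  next
    case False
    then show ?thesis using Phi_out permutes_not_in[OF p] three by auto
  qed
qed

lemma Phi_iso: "Phi \<in> iso hidden_sym_group (sym_group 3)"
proof -
  have hom: "Phi \<in> hom hidden_sym_group (sym_group 3)"
    unfolding hom_def hidden_sym_group_def sym_group_def
    using Phi_hat_perm Phi_hom by auto
  have inj: "inj_on Phi (hat ` {p. p permutes {1..4}})"
    using Phi_inj by (auto simp: inj_on_def)
  have img: "Phi ` (hat ` {p. p permutes {1..4}}) = {p. p permutes {1..3}}"
  proof
    show "Phi ` (hat ` {p. p permutes {1..4}}) \<subseteq> {p. p permutes {1..3}}" using Phi_hat_perm by auto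
    show "{p. p permutes {1..3}} \<subseteq> Phi ` (hat ` {p. p permutes {1..4}})"
    proof
      fix p :: "nat \<Rightarrow> nat" assume "p \<in> {p. p permutes {1..3}}"
      then have p: "p permutes {1..3}" by simp
      have "p permutes {1..4}" using permutes_subset[OF p] by auto
      then show "p \<in> Phi ` (hat ` {p. p permutes {1..4}})" using Phi_surj[OF p] by (metis image_eqI mem_Collect_eq)
    qed
  qed
  show ?thesis unfolding iso_def using hom inj img
    by (simp add: bij_betw_def hidden_sym_group_def sym_group_def)
qed

lemma card6: "card (hat ` carrier (sym_group 4)) = 6"
proof -
  have "bij_betw Phi (hat ` carrier (sym_group 4)) (carrier (sym_group 3))"
    using Phi_iso unfolding iso_def hidden_sym_group_def by simp
  then have "card (hat ` carrier (sym_group 4)) = card {p. p permutes {1..3::nat}}"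
    unfolding sym_group_def by (simp add: bij_betw_same_card)
  also have "\<dots> = fact 3" by (rule card_permutations) auto
  finally show ?thesis by (simp add: fact_numeral)
qed

lemma pick6:
  assumes "finite S" "card S = 6" "length xs < 6"
  obtains x where "x \<in> S" "x \<notin> set xs"
proof -
  have "\<not> S \<subseteq> set xs"
  proof
    assume "S \<subseteq> set xs"
    then have "card S \<le> card (set xs)" by (simp add: card_mono)
    also have "\<dots> \<le> length xs" by (rule card_length)
    finally show False using assms by simp
  qed
  then show ?thesis using that by blast
qed

lemma six_eq:
  assumes "finite S" "card S = 6" "distinct [x1,x2,x3,x4,x5,x6]" "set [x1,x2,x3,x4,x5,x6] \<subseteq> S"
  shows "S = {x1,x2,x3,x4,x5,x6}"
proof -
  have "set [x1,x2,x3,x4,x5,x6] = S"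
    by (rule card_subset_eq[OF assms(1) assms(4)]) (use assms(2,3) distinct_card in fastforce)
  then show ?thesis by simp
qed

lemma invol6:
  assumes S: "finite S" "card S = 6" and m: "\<And>x. x \<in> S \<Longrightarrow> f x \<in> S"
    and ii: "\<And>x. x \<in> S \<Longrightarrow> f (f x) = x" and nf: "\<And>x. x \<in> S \<Longrightarrow> f x \<noteq> x"
  shows "three_disjoint_transpositions f S"
proof -
  obtain x1 where x1: "x1 \<in> S" using pick6[OF S, of "[]"] by auto
  obtain x3 where x3: "x3 \<in> S" "x3 \<notin> set [x1, f x1]" using pick6[OF S, of "[x1, f x1]"] by auto
  obtain x5 where x5: "x5 \<in> S" "x5 \<notin> set [x1, f x1, x3, f x3]" using pick6[OF S, of "[x1, f x1, x3, f x3]"] by auto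
  have d: "distinct [x1, f x1, x3, f x3, x5, f x5]"
    using x1 x3 x5 nf ii by simp metis
  have s: "set [x1, f x1, x3, f x3, x5, f x5] \<subseteq> S" using x1 x3 x5 m by simp
  show ?thesis unfolding three_disjoint_transpositions_def
    by (rule exI[of _ x1], rule exI[of _ "f x1"], rule exI[of _ x3], rule exI[of _ "f x3"],
        rule exI[of _ x5], rule exI[of _ "f x5"])
       (use d six_eq[OF S d s] ii x1 x3 x5 in simp)
qed

lemma cyc6:
  assumes S: "finite S" "card S = 6" and m: "\<And>x. x \<in> S \<Longrightarrow> f x \<in> S"
    and ii: "\<And>x. x \<in> S \<Longrightarrow> f (f (f x)) = x" and nf: "\<And>x. x \<in> S \<Longrightarrow> f x \<noteq> x"
  shows "two_disjoint_3cycles f S"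
proof -
  obtain x1 where x1: "x1 \<in> S" using pick6[OF S, of "[]"] by auto
  obtain x4 where x4: "x4 \<in> S" "x4 \<notin> set [x1, f x1, f (f x1)]" using pick6[OF S, of "[x1, f x1, f (f x1)]"] by auto
  have a1: "f x1 \<in> S" "f (f x1) \<in> S" "f x4 \<in> S" "f (f x4) \<in> S" using m x1 x4 by auto
  have d: "distinct [x1, f x1, f (f x1), x4, f x4, f (f x4)]"
    using x1 x4 a1 nf ii by simp metis
  have s: "set [x1, f x1, f (f x1), x4, f x4, f (f x4)] \<subseteq> S" using x1 x4 a1 by simp
  show ?thesis unfolding two_disjoint_3cycles_def
    by (rule exI[of _ x1], rule exI[of _ "f x1"], rule exI[of _ "f (f x1)"], rule exI[of _ x4],
        rule exI[of _ "f x4"], rule exI[of _ "f (f x4)"])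
       (use d six_eq[OF S d s] ii x1 x4 in simp)
qed

lemma Tor_inj1:
  assumes a: "a \<in> {1..4}"
  shows "Tor a b c d = Tor a b' c' d' \<longleftrightarrow> b = b' \<and> c = c' \<and> d = d'"
proof
  assume "Tor a b c d = Tor a b' c' d'"
  then obtain g where g: "g \<in> Gk" "a = g a" "b = g b'" "c = g c'" "d = g d'" by (rule Tor_E)
  have "g = id"
  proof (rule ccontr)
    assume "g \<noteq> id"
    then have "\<forall>x\<in>{1..4}. g x \<noteq> x" using g(1) Gk_char by blast
    then show False using g(2) a by metis
  qed
  then show "b = b' \<and> c = c' \<and> d = d'" using g by simp
qed simp

definition S6 :: "nat set list set set" where
  "S6 = {Tor 1 2 3 4, Tor 1 2 4 3, Tor 1 3 2 4, Tor 1 3 4 2, Tor 1 4 2 3, Tor 1 4 3 2}"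

lemma card_S6: "card S6 = 6"
  unfolding S6_def by (simp add: Tor_inj1)

lemma hG: "a \<in> {1..4} \<Longrightarrow> \<exists>h\<in>Gk. h a = (1::nat)"
proof -
  assume "a \<in> {1..4}"
  then have "a \<in> {1,2,3,4}" unfolding four .
  then show ?thesis
  proof (elim insertE emptyE)
    assume "a = 1" then show ?thesis using Gk_id by (intro bexI[of _ id]) simp_all
  next
    assume a: "a = 2"
    have "transpose 1 2 \<circ> transpose 3 4 \<in> Gk" by (simp add: Gk_def)
    then show ?thesis using a by (intro bexI[of _ "transpose 1 2 \<circ> transpose 3 4"]) (simp_all add: transpose_def)
  next
    assume a: "a = 3"
    have "transpose 1 3 \<circ> transpose 2 4 \<in> Gk" by (simp add: Gk_def)
    then show ?thesis using a by (intro bexI[of _ "transpose 1 3 \<circ> transpose 2 4"]) (simp_all add: transpose_def)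
  next
    assume a: "a = 4"
    have "transpose 1 4 \<circ> transpose 2 3 \<in> Gk" by (simp add: Gk_def)
    then show ?thesis using a by (intro bexI[of _ "transpose 1 4 \<circ> transpose 2 3"]) (simp_all add: transpose_def)
  qed
qed

lemma TG1111: "TG [1,1,1,1] = S6"
proof
  show "TG [1,1,1,1] \<subseteq> S6"
  proof
    fix x assume "x \<in> TG [1,1,1,1]"
    then obtain A where A: "A \<in> tabloids [1,1,1,1]" and xA: "x = orb A" unfolding TG_def by blast
    obtain a b c d where Ae: "A = [{a},{b},{c},{d}]" and abcd: "distinct [a,b,c,d]"
      "a \<in> {1..4}" "b \<in> {1..4}" "c \<in> {1..4}" "d \<in> {1..4}" using A by (rule tab1111_E)
    obtain h where h: "h \<in> Gk" "h a = 1" using hG[OF abcd(2)] by blast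
    have x: "x = Tor 1 (h b) (h c) (h d)" using xA Ae Tor_def Tor_G[OF h(1)] h(2) by metis
    note dp = distinct_perm[OF Gk_perm[OF h(1)] abcd]
    have B: "h b \<in> {2,3,4}" "h c \<in> {2,3,4}" "h d \<in> {2,3,4}" using dp h(2) four by auto
    have "Tor 1 (h b) (h c) (h d) \<in> S6" using B dp(1) unfolding S6_def
      by (elim insertE emptyE) simp_all
    then show "x \<in> S6" using x by simp
  qed
  have "Tor 1 b c d \<in> TG [1,1,1,1]" if "distinct [1,b,c,d]" "b \<in> {1..4}" "c \<in> {1..4}" "d \<in> {1..4}" for b c d
    unfolding TG_def Tor_def using tab1111[OF that(1) _ that(2-4)] by auto
  then show "S6 \<subseteq> TG [1,1,1,1]" unfolding S6_def by auto
qed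

lemma hat_TG:
  assumes v: "v permutes {1..4}" and mu: "mu \<in> partitions4" and x: "x \<in> TG mu"
  shows "hat v x \<in> TG mu"
  using hat_Aut0[OF v] mu x unfolding Aut0_def by blast

lemma transp_case:
  assumes "is_transposition4 v"
  shows "three_disjoint_transpositions (hat v) (TG [1,1,1,1])"
proof -
  obtain a b where ab: "a \<in> {1..4}" "b \<in> {1..4}" "a \<noteq> b" "v = transpose a b"
    using assms unfolding is_transposition4_def by blast
  have v: "v permutes {1..4}" using ab by (simp add: permutes_swap_id)
  have nG: "v \<notin> Gk"
  proof
    assume "v \<in> Gk"
    then have c: "v = id \<or> (\<forall>x\<in>{1..4}. v x \<noteq> x \<and> v (v x) = x)" using Gk_char by blast
    obtain k l where kl: "k \<in> {1..4}" "l \<in> {1..4}" "distinct [a,b,k,l]" using compl_ex[OF ab(1-3)] by blast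
    have "v a \<noteq> a" "v k = k" using ab kl by (auto simp: transpose_def)
    then show False using c kl by auto
  qed
  show ?thesis unfolding TG1111
  proof (rule invol6)
    show "finite S6" unfolding S6_def by simp
    show "card S6 = 6" by (rule card_S6)
    show "hat v x \<in> S6" if "x \<in> S6" for x using hat_TG[OF v part1111] that TG1111 by simp
    show "hat v (hat v x) = x" for x using hat_comp[OF v v] ab(4) hat_id by simp
    show "hat v x \<noteq> x" if "x \<in> S6" for x using fix1111[OF v] that TG1111 nG by auto
  qed
qed

lemma cyc_case:
  assumes "is_3cycle4 v"
  shows "two_disjoint_3cycles (hat v) (TG [1,1,1,1])"
proof -
  obtain a b c where abc: "a \<in> {1..4}" "b \<in> {1..4}" "c \<in> {1..4}" "distinct [a,b,c]"
    and ve: "v = (\<lambda>x. if x = a then b else if x = b then c else if x = c then a else x)"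
    using assms unfolding is_3cycle4_def by blast
  have vt: "v = transpose a b \<circ> transpose b c"
    unfolding ve using abc(4) by (auto simp: fun_eq_iff transpose_def)
  have v: "v permutes {1..4}" unfolding vt using abc by (intro permutes_compose permutes_swap_id) auto
  have v3: "v \<circ> v \<circ> v = id" unfolding ve using abc(4) by (auto simp: fun_eq_iff)
  have nG: "v \<notin> Gk"
  proof
    assume "v \<in> Gk"
    then have cc: "v = id \<or> (\<forall>x\<in>{1..4}. v x \<noteq> x \<and> v (v x) = x)" using Gk_char by blast
    obtain k l where kl: "k \<in> {1..4}" "l \<in> {1..4}" "distinct [a,b,k,l]" using compl_ex[OF abc(1,2)] abc(4) by auto
    have "c \<in> {k,l}" using all_four[OF kl(3) abc(1,2) kl(1,2)] abc by auto
    then obtain d where d: "d \<in> {1..4}" "d \<noteq> a" "d \<noteq> b" "d \<noteq> c" using kl by auto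
    have "v a \<noteq> a" "v d = d" using abc d unfolding ve by auto
    then show False using cc d abc by auto
  qed
  show ?thesis unfolding TG1111
  proof (rule cyc6)
    show "finite S6" unfolding S6_def by simp
    show "card S6 = 6" by (rule card_S6)
    show "hat v x \<in> S6" if "x \<in> S6" for x using hat_TG[OF v part1111] that TG1111 by simp
    show "hat v (hat v (hat v x)) = x" for x
      using hat_comp[OF v v] hat_comp[OF v permutes_compose[OF v v]] v3 hat_id by (simp add: comp_assoc)
    show "hat v x \<noteq> x" if "x \<in> S6" for x using fix1111[OF v] that TG1111 nG by auto
  qed
qed

theorem proposition10p1p2:
  shows "(\<forall>\<nu>\<in>carrier (sym_group 4). (\<lambda>g. \<nu> \<circ> g \<circ> Hilbert_Choice.inv \<nu>) ` Gk = Gk)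
    \<and> hat \<in> hom (sym_group 4) aut0_group
    \<and> kernel (sym_group 4) aut0_group hat = Gk
    \<and> card (hat ` carrier (sym_group 4)) = 6
    \<and> hidden_sym_group \<cong> sym_group 3
    \<and> (\<forall>i\<in>{1..4}. \<forall>j\<in>{1..4}. \<forall>k\<in>{1..4}. \<forall>l\<in>{1..4}. distinct [i, j, k, l] \<longrightarrow>
          P i j = P k l \<and> Q i j = Q k l)
    \<and> (\<forall>\<nu>\<in>carrier (sym_group 4). \<forall>i\<in>{1..4}. \<forall>j\<in>{1..4}. i \<noteq> j \<longrightarrow>
          hat \<nu> (P i j) = P (\<nu> i) (\<nu> j) \<and> hat \<nu> (Q i j) = Q (\<nu> i) (\<nu> j))
    \<and> hat (transpose 1 3) (P 1 2) = P 1 4 \<and> hat (transpose 1 3) (P 1 4) = P 1 2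
    \<and> hat (transpose 1 3) (P 1 3) = P 1 3
    \<and> hat (transpose 1 3) (Q 1 2) = Q 1 4 \<and> hat (transpose 1 3) (Q 1 4) = Q 1 2
    \<and> hat (transpose 1 3) (Q 1 3) = Q 1 3
    \<and> (\<forall>\<nu>. is_transposition4 \<nu> \<longrightarrow> three_disjoint_transpositions (hat \<nu>) (TG [1, 1, 1, 1]))
    \<and> (\<forall>\<nu>. is_3cycle4 \<nu> \<longrightarrow> two_disjoint_3cycles (hat \<nu>) (TG [1, 1, 1, 1]))"
proof -
  have c1: "\<forall>\<nu>\<in>carrier (sym_group 4). (\<lambda>g. \<nu> \<circ> g \<circ> Hilbert_Choice.inv \<nu>) ` Gk = Gk"
    unfolding sym_group_def using conj_image by simp
  have c5: "hidden_sym_group \<cong> sym_group 3" unfolding is_iso_def using Phi_iso by blast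
  have c6: "\<forall>i\<in>{1..4}. \<forall>j\<in>{1..4}. \<forall>k\<in>{1..4}. \<forall>l\<in>{1..4}. distinct [i, j, k, l] \<longrightarrow>
          P i j = P k l \<and> Q i j = Q k l"
    using P_sym Q_sym by blast
  have c7: "\<forall>\<nu>\<in>carrier (sym_group 4). \<forall>i\<in>{1..4}. \<forall>j\<in>{1..4}. i \<noteq> j \<longrightarrow>
          hat \<nu> (P i j) = P (\<nu> i) (\<nu> j) \<and> hat \<nu> (Q i j) = Q (\<nu> i) (\<nu> j)"
    unfolding sym_group_def using hat_PQ by simp
  have t: "transpose 1 3 permutes {1..4::nat}" by (rule permutes_swap_id) auto
  have t1: "transpose 1 3 (1::nat) = 3" "transpose 1 3 (2::nat) = 2" "transpose 1 3 (3::nat) = 1"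
    "transpose 1 3 (4::nat) = 4" by (simp_all add: transpose_def)
  have h12: "hat (transpose 1 3) (P 1 2) = P 3 2 \<and> hat (transpose 1 3) (Q 1 2) = Q 3 2"
    using hat_PQ[OF t, of 1 2] t1 by simp
  have h14: "hat (transpose 1 3) (P 1 4) = P 3 4 \<and> hat (transpose 1 3) (Q 1 4) = Q 3 4"
    using hat_PQ[OF t, of 1 4] t1 by simp
  have h13: "hat (transpose 1 3) (P 1 3) = P 3 1 \<and> hat (transpose 1 3) (Q 1 3) = Q 3 1"
    using hat_PQ[OF t, of 1 3] t1 by simp
  have s1: "P 3 2 = P 1 4" "Q 3 2 = Q 1 4" using P_sym[of 3 2 1 4] Q_sym[of 3 2 1 4] by simp_all
  have s2: "P 3 4 = P 1 2" "Q 3 4 = Q 1 2" using P_sym[of 3 4 1 2] Q_sym[of 3 4 1 2] by simp_all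
  have tc: "\<forall>\<nu>. is_transposition4 \<nu> \<longrightarrow> three_disjoint_transpositions (hat \<nu>) (TG [1, 1, 1, 1])"
    using transp_case by blast
  have cc: "\<forall>\<nu>. is_3cycle4 \<nu> \<longrightarrow> two_disjoint_3cycles (hat \<nu>) (TG [1, 1, 1, 1])"
    using cyc_case by blast
  have p13: "P 3 1 = P 1 3" "Q 3 1 = Q 1 3" using P_comm[of 3 1] Q_comm[of 3 1] by simp_all
  show ?thesis
    apply (intro conjI)
                   apply (rule c1)
                  apply (rule hat_hom)
                 apply (rule kernel_hat)
                apply (rule card6)
               apply (rule c5)
              apply (rule c6)
             apply (rule c7)
    using h12 h14 h13 s1 s2 p13 tc cc by simp_all
qed

end
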